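(* Fix $d \geq 2$. If $c > (d+1)/2$ and $Y \sim Y_d(n, \frac{c\log n}{n})$, then with high probability $Y$ does not contain two isolated $(d-1)$-faces that share a common $(d-2)$-face.
   Context: $Y_d(n,p)$ is the random $d$-dimensional simplicial complex on $n$ vertices with complete $(d-1)$-skeleton in which each $d$-face is included independently with probability $p$. "With high probability" means with probability tending to $1$ as $n\to\infty$. A $(d-1)$-face is isolated if it is contained in no $d$-face of $Y$. *)

theory Defs
  imports "HOL-Probability.Probability"
begin

definition faces :: "nat \<Rightarrow> nat \<Rightarrow> nat set set" where
  "faces n k = {F. F \<subseteq> {0..<n} \<and> card F = k + 1}"

text \<open>Y_d(n,p): complete (d-1)-skeleton, each d-face included independently with
  probability p. The complex is represented by its set of d-faces (the lower skeleton
  is complete, hence determined).\<close>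
definition Y_pmf :: "nat \<Rightarrow> nat \<Rightarrow> real \<Rightarrow> nat set set pmf" where
  "Y_pmf d n p =
     map_pmf (\<lambda>f. {F \<in> faces n d. f F}) (Pi_pmf (faces n d) False (\<lambda>_. bernoulli_pmf p))"

definition isolated_face :: "nat \<Rightarrow> nat \<Rightarrow> nat set set \<Rightarrow> nat set \<Rightarrow> bool" where
  "isolated_face d n Y \<sigma> \<longleftrightarrow> \<sigma> \<in> faces n (d - 1) \<and> (\<forall>F\<in>Y. \<not> \<sigma> \<subseteq> F)"

definition two_adjacent_isolated :: "nat \<Rightarrow> nat \<Rightarrow> nat set set \<Rightarrow> bool" where
  "two_adjacent_isolated d n Y \<longleftrightarrow>
     (\<exists>\<sigma> \<tau> \<rho>. \<sigma> \<noteq> \<tau> \<and> isolated_face d n Y \<sigma> \<and> isolated_face d n Y \<tau> \<and>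
        \<rho> \<in> faces n (d - 2) \<and> \<rho> \<subseteq> \<sigma> \<and> \<rho> \<subseteq> \<tau>)"

end

theory Submission imports Defs "HOL-Real_Asymp.Real_Asymp" begin

lemma finite_faces: "finite (faces n k)"
proof -
  have "faces n k \<subseteq> Pow {0..<n}" by (auto simp: faces_def)
  then show ?thesis by (rule finite_subset) simp
qed

lemma card_faces: "card (faces n k) = n choose (k + 1)"
proof -
  have "faces n k = {B. B \<subseteq> {0..<n} \<and> card B = k + 1}" by (simp add: faces_def)
  then show ?thesis using n_subsets[of "{0..<n}" "k+1"] by simp
qed

lemma prob_absent:
  assumes S: "S \<subseteq> faces n d" and p: "0 \<le> p" "p \<le> 1"
  shows "measure_pmf.prob (Y_pmf d n p) {Y. \<forall>F\<in>S. F \<notin> Y} = (1 - p) ^ card S"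
proof -
  define B where "B = (\<lambda>x::nat set. if x \<in> S then {False} else (UNIV :: bool set))"
  have pre: "(\<lambda>f. {F \<in> faces n d. f F}) -` {Y. \<forall>F\<in>S. F \<notin> Y} = Pi (faces n d) B"
    using S by (auto simp: B_def Pi_def)
  have "measure_pmf.prob (Y_pmf d n p) {Y. \<forall>F\<in>S. F \<notin> Y}
      = measure_pmf.prob (Pi_pmf (faces n d) False (\<lambda>_. bernoulli_pmf p)) (Pi (faces n d) B)"
    unfolding Y_pmf_def measure_map_pmf pre ..
  also have "\<dots> = (\<Prod>x\<in>faces n d. measure_pmf.prob (bernoulli_pmf p) (B x))"
    by (rule measure_Pi_pmf_Pi[OF finite_faces])
  also have "\<dots> = (\<Prod>x\<in>faces n d. if x \<in> S then 1 - p else 1)"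
    by (intro prod.cong) (auto simp: B_def measure_pmf_single p)
  also have "\<dots> = (1 - p) ^ card S"
    using S finite_faces[of n d]
    by (simp add: prod.If_cases Int_absorb1 Int_absorb2)
  finally show ?thesis .
qed


definition Ev :: "nat \<Rightarrow> nat \<Rightarrow> nat set \<times> nat \<times> nat \<Rightarrow> nat set set set" where
  "Ev d n t = (case t of (\<sigma>, u, w) \<Rightarrow>
     {Y. \<sigma> \<noteq> insert w (\<sigma> - {u}) \<and> isolated_face d n Y \<sigma> \<and> isolated_face d n Y (insert w (\<sigma> - {u}))})"

lemma Ev_bound:
  assumes d: "d \<ge> 2" and p: "0 \<le> p" "p \<le> 1"
  shows "measure_pmf.prob (Y_pmf d n p) (Ev d n (\<sigma>, u, w)) \<le> (1 - p) ^ (2 * (n - d - 1))"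
proof -
  define \<tau> where "\<tau> = insert w (\<sigma> - {u})"
  show ?thesis
  proof (cases "\<sigma> \<noteq> \<tau> \<and> \<sigma> \<in> faces n (d - 1) \<and> \<tau> \<in> faces n (d - 1)")
    case False
    then have "Ev d n (\<sigma>, u, w) = {}" by (auto simp: Ev_def \<tau>_def[symmetric] isolated_face_def)
    then show ?thesis using p by simp
  next
    case True
    then have ne: "\<sigma> \<noteq> \<tau>" and sf: "\<sigma> \<in> faces n (d - 1)" and tf: "\<tau> \<in> faces n (d - 1)" by auto
    have cs: "card \<sigma> = d" "\<sigma> \<subseteq> {0..<n}" using sf d by (auto simp: faces_def)
    have ct: "card \<tau> = d" "\<tau> \<subseteq> {0..<n}" using tf d by (auto simp: faces_def)
    have fs: "finite \<sigma>" "finite \<tau>" using cs ct d by (auto intro: card_ge_0_finite)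
    define R where "R = {0..<n} - (\<sigma> \<union> \<tau>)"
    define S where "S = (\<lambda>v. insert v \<sigma>) ` R \<union> (\<lambda>v. insert v \<tau>) ` R"
    have Sf: "S \<subseteq> faces n d"
    proof
      fix F assume "F \<in> S"
      then obtain v A where vA: "v \<in> R" "F = insert v A" "A = \<sigma> \<or> A = \<tau>" unfolding S_def by blast
      then have A: "card A = d" "A \<subseteq> {0..<n}" "finite A" "v \<notin> A" "v < n"
        using cs ct fs by (auto simp: R_def)
      then have "card F = d + 1" using vA(2) by simp
      moreover have "F \<subseteq> {0..<n}" using A vA(2) by auto
      ultimately show "F \<in> faces n d" by (simp add: faces_def)
    qed

    have inj1: "inj_on (\<lambda>v. insert v \<sigma>) R" unfolding inj_on_def R_def by (metis Diff_iff UnCI insertE insertI1)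
    have inj2: "inj_on (\<lambda>v. insert v \<tau>) R" unfolding inj_on_def R_def by (metis Diff_iff UnCI insertE insertI1)
    have disj: "(\<lambda>v. insert v \<sigma>) ` R \<inter> (\<lambda>v. insert v \<tau>) ` R = {}"
    proof (rule ccontr)
      assume "(\<lambda>v. insert v \<sigma>) ` R \<inter> (\<lambda>v. insert v \<tau>) ` R \<noteq> {}"
      then obtain v v' where vv: "v \<in> R" "v' \<in> R" "insert v \<sigma> = insert v' \<tau>" by auto
      have "\<sigma> = insert v \<sigma> \<inter> (\<sigma> \<union> \<tau>)" using vv(1) by (auto simp: R_def)
      also have "\<dots> = insert v' \<tau> \<inter> (\<sigma> \<union> \<tau>)" using vv(3) by simp
      also have "\<dots> = \<tau>" using vv(2) by (auto simp: R_def)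
      finally show False using ne by simp
    qed
    have finR: "finite R" by (simp add: R_def)
    have cardS: "card S = 2 * card R"
      unfolding S_def using disj finR
      by (simp add: card_Un_disjoint card_image inj1 inj2)
    have "\<sigma> \<union> \<tau> \<subseteq> insert w \<sigma>" by (auto simp: \<tau>_def)
    then have "card (\<sigma> \<union> \<tau>) \<le> card (insert w \<sigma>)" using fs by (intro card_mono) auto
    also have "\<dots> \<le> d + 1" using cs fs by (simp add: card_insert_if)
    finally have cu: "card (\<sigma> \<union> \<tau>) \<le> d + 1" .
    have "card R = n - card (\<sigma> \<union> \<tau>)"
      unfolding R_def using cs ct fs by (subst card_Diff_subset) auto
    then have cR: "n - d - 1 \<le> card R" using cu by linarith
    have sub: "Ev d n (\<sigma>, u, w) \<subseteq> {Y. \<forall>F\<in>S. F \<notin> Y}"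
    proof
      fix Y assume "Y \<in> Ev d n (\<sigma>, u, w)"
      then have i1: "\<forall>F\<in>Y. \<not> \<sigma> \<subseteq> F" and i2: "\<forall>F\<in>Y. \<not> \<tau> \<subseteq> F"
        unfolding Ev_def \<tau>_def isolated_face_def by auto
      have "F \<notin> Y" if "F \<in> S" for F
      proof -
        from that obtain v where "F = insert v \<sigma> \<or> F = insert v \<tau>" unfolding S_def by blast
        then have "\<sigma> \<subseteq> F \<or> \<tau> \<subseteq> F" by blast
        then show ?thesis using i1 i2 by blast
      qed
      then show "Y \<in> {Y. \<forall>F\<in>S. F \<notin> Y}" by blast
    qed
    have "measure_pmf.prob (Y_pmf d n p) (Ev d n (\<sigma>, u, w))
        \<le> measure_pmf.prob (Y_pmf d n p) {Y. \<forall>F\<in>S. F \<notin> Y}"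
      by (rule measure_pmf.finite_measure_mono[OF sub]) simp
    also have "\<dots> = (1 - p) ^ card S" by (rule prob_absent[OF Sf p])
    also have "\<dots> \<le> (1 - p) ^ (2 * (n - d - 1))"
      using p cR cardS by (intro power_decreasing) auto
    finally show ?thesis .
  qed
qed

lemma cover:
  assumes d: "d \<ge> 2"
  shows "{Y. two_adjacent_isolated d n Y} \<subseteq>
     (\<Union>t\<in>Sigma (faces n (d - 1)) (\<lambda>\<sigma>. \<sigma> \<times> {0..<n}). Ev d n t)"
proof
  fix Y assume "Y \<in> {Y. two_adjacent_isolated d n Y}"
  then obtain \<sigma> \<tau> \<rho> where h: "\<sigma> \<noteq> \<tau>" "isolated_face d n Y \<sigma>" "isolated_face d n Y \<tau>"
    "\<rho> \<in> faces n (d - 2)" "\<rho> \<subseteq> \<sigma>" "\<rho> \<subseteq> \<tau>"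
    by (auto simp: two_adjacent_isolated_def)
  have sf: "\<sigma> \<in> faces n (d - 1)" and tf: "\<tau> \<in> faces n (d - 1)" using h by (auto simp: isolated_face_def)
  have cs: "card \<sigma> = d" "\<sigma> \<subseteq> {0..<n}" using sf d by (auto simp: faces_def)
  have ct: "card \<tau> = d" "\<tau> \<subseteq> {0..<n}" using tf d by (auto simp: faces_def)
  have cr: "card \<rho> = d - 1" using h(4) d by (auto simp: faces_def)
  have fs: "finite \<sigma>" "finite \<tau>" using cs ct d by (auto intro: card_ge_0_finite)
  have "card (\<sigma> - \<rho>) = 1" using cs cr h(5) fs d by (subst card_Diff_subset) (auto intro: finite_subset)
  then obtain u where u: "\<sigma> - \<rho> = {u}" by (rule card_1_singletonE)
  have "card (\<tau> - \<rho>) = 1" using ct cr h(6) fs d by (subst card_Diff_subset) (auto intro: finite_subset)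
  then obtain w where w: "\<tau> - \<rho> = {w}" by (rule card_1_singletonE)
  have su: "\<sigma> = insert u \<rho>" "u \<notin> \<rho>" using u h(5) by auto
  have tw: "\<tau> = insert w \<rho>" "w \<in> \<tau>" using w h(6) by auto
  have "\<sigma> - {u} = \<rho>" using su by auto
  then have teq: "\<tau> = insert w (\<sigma> - {u})" using tw by simp
  have mem: "(\<sigma>, u, w) \<in> Sigma (faces n (d - 1)) (\<lambda>\<sigma>. \<sigma> \<times> {0..<n})"
    using sf su tw ct by auto
  have "Y \<in> Ev d n (\<sigma>, u, w)" using h teq by (auto simp: Ev_def)
  then show "Y \<in> (\<Union>t\<in>Sigma (faces n (d - 1)) (\<lambda>\<sigma>. \<sigma> \<times> {0..<n}). Ev d n t)" using mem by blast
qed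


lemma main_bound:
  assumes d: "d \<ge> 2" and p: "0 \<le> p" "p \<le> 1"
  shows "measure_pmf.prob (Y_pmf d n p) {Y. two_adjacent_isolated d n Y}
          \<le> real d * real n ^ (d + 1) * (1 - p) ^ (2 * (n - d - 1))"
proof -
  define T where "T = Sigma (faces n (d - 1)) (\<lambda>\<sigma>. \<sigma> \<times> {0..<n})"
  have finT: "finite T" unfolding T_def
    by (intro finite_SigmaI finite_faces) (auto simp: faces_def intro: finite_subset)
  have cT: "card T = (n choose d) * (d * n)"
  proof -
    have "card T = (\<Sum>\<sigma>\<in>faces n (d - 1). card (\<sigma> \<times> {0..<n}))"
      unfolding T_def by (rule card_SigmaI[OF finite_faces]) (auto simp: faces_def intro: finite_subset)
    also have "\<dots> = (\<Sum>\<sigma>\<in>faces n (d - 1). d * n)"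
      by (intro sum.cong refl) (use d in \<open>auto simp: faces_def card_cartesian_product\<close>)
    also have "\<dots> = (n choose d) * (d * n)" using d by (simp add: card_faces)
    finally show ?thesis .
  qed
  have "n choose d \<le> n ^ d" by (cases "d \<le> n") (auto simp: binomial_le_pow binomial_eq_0)
  then have "card T \<le> n ^ d * (d * n)" unfolding cT by (intro mult_right_mono) auto
  then have cT': "real (card T) \<le> real d * real n ^ (d + 1)"
    by (simp add: algebra_simps) (metis of_nat_le_iff of_nat_mult of_nat_power)
  have "measure_pmf.prob (Y_pmf d n p) {Y. two_adjacent_isolated d n Y}
      \<le> measure_pmf.prob (Y_pmf d n p) (\<Union>t\<in>T. Ev d n t)"
    by (rule measure_pmf.finite_measure_mono) (use cover[OF d] in \<open>auto simp: T_def\<close>)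
  also have "\<dots> \<le> (\<Sum>t\<in>T. measure_pmf.prob (Y_pmf d n p) (Ev d n t))"
    by (rule measure_pmf.finite_measure_subadditive_finite[OF finT]) auto
  also have "\<dots> \<le> (\<Sum>t\<in>T. (1 - p) ^ (2 * (n - d - 1)))"
  proof (rule sum_mono)
    fix t assume "t \<in> T"
    obtain a b c where "t = (a, b, c)" by (cases t) auto
    then show "measure_pmf.prob (Y_pmf d n p) (Ev d n t) \<le> (1 - p) ^ (2 * (n - d - 1))"
      using Ev_bound[OF d p] by simp
  qed
  also have "\<dots> = real (card T) * (1 - p) ^ (2 * (n - d - 1))" by simp
  also have "\<dots> \<le> real d * real n ^ (d + 1) * (1 - p) ^ (2 * (n - d - 1))"
    using p by (intro mult_right_mono cT') auto
  finally show ?thesis .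
qed


theorem lemma5:
  fixes d :: nat and c :: real
  assumes "d \<ge> 2" and "c > (real d + 1) / 2"
  shows "(\<lambda>n. measure_pmf.prob (Y_pmf d n (c * ln (real n) / real n))
                 {Y. two_adjacent_isolated d n Y}) \<longlonglongrightarrow> 0"
proof -
  define e where "e = 2 * c - real d - 1"
  have e: "e > 0" using assms(2) by (simp add: e_def field_simps)
  have c0: "c > 0" using assms by (smt (verit) divide_nonneg_nonneg of_nat_0_le_iff)
  define K where "K = 2 * c * (real d + 1)"
  define g where "g = (\<lambda>n::nat. real d * exp (- e * ln (real n) + K * ln (real n) / real n))"
  have g0: "g \<longlonglongrightarrow> 0"
  proof -
    have "(\<lambda>n::nat. exp (- e * ln (real n) + K * ln (real n) / real n)) \<longlonglongrightarrow> 0"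
      using e by real_asymp
    then show ?thesis unfolding g_def by (rule tendsto_mult_right_zero)
  qed
  have p0: "(\<lambda>n::nat. c * ln (real n) / real n) \<longlonglongrightarrow> 0" by real_asymp
  have ev1: "eventually (\<lambda>n. c * ln (real n) / real n < 1) sequentially"
    using order_tendstoD(2)[OF p0] by simp
  have ev2: "eventually (\<lambda>n::nat. n \<ge> d + 2) sequentially" by (rule eventually_ge_at_top)
  show ?thesis
  proof (rule tendsto_sandwich[OF _ _ tendsto_const g0])
    show "eventually (\<lambda>n. 0 \<le> measure_pmf.prob (Y_pmf d n (c * ln (real n) / real n))
                 {Y. two_adjacent_isolated d n Y}) sequentially" by simp
    show "eventually (\<lambda>n. measure_pmf.prob (Y_pmf d n (c * ln (real n) / real n))
                 {Y. two_adjacent_isolated d n Y} \<le> g n) sequentially"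
      using ev1 ev2
    proof eventually_elim
      case (elim n)
      define p where "p = c * ln (real n) / real n"
      have n: "real n > 0" "n \<ge> d + 2" using elim by auto
      have p: "0 \<le> p" "p \<le> 1" using elim c0 n by (auto simp: p_def)
      define m where "m = 2 * (n - d - 1)"
      have m: "real m = 2 * (real n - real d - 1)" using n by (simp add: m_def)
      have "measure_pmf.prob (Y_pmf d n p) {Y. two_adjacent_isolated d n Y}
          \<le> real d * real n ^ (d + 1) * (1 - p) ^ m"
        unfolding m_def by (rule main_bound[OF assms(1) p])
      also have "\<dots> \<le> real d * real n ^ (d + 1) * exp (- p) ^ m"
        using p by (intro mult_left_mono power_mono) (auto simp: exp_ge_add_one_self[of "-p", simplified])
      also have "exp (- p) ^ m = exp (- p * real m)"
        by (simp add: exp_of_nat_mult[symmetric] mult.commute)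
      also have "real n ^ (d + 1) = exp (real (d + 1) * ln (real n))"
      proof -
        have "real n ^ (d + 1) = exp (ln (real n ^ (d + 1)))" using n by simp
        also have "ln (real n ^ (d + 1)) = real (d + 1) * ln (real n)" by (rule ln_realpow)
        finally show ?thesis .
      qed
      also have "real d * exp (real (d + 1) * ln (real n)) * exp (- p * real m)
           = real d * exp (real (d + 1) * ln (real n) - p * real m)"
        by (simp add: exp_diff exp_minus field_simps)
      also have "real (d + 1) * ln (real n) - p * real m = - e * ln (real n) + K * ln (real n) / real n"
        unfolding m p_def e_def K_def using n by (simp add: field_simps)
      finally show ?case by (simp add: g_def p_def)
    qed
  qed
qed

end
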